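(* Let $\mathcal{C}$ be a deflation-exact category and $\mathcal{A}$ an admissibly deflation-percolating subcategory. Let $X\rightarrowtail Y\twoheadrightarrow Z$ be a conflation and $f\colon Y\twoheadrightarrow B$ a deflation with $B\in\mathcal{A}$. Then there is a commutative diagram $$\begin{array}{ccccc} X''&\rightarrowtail&Y''&\twoheadrightarrow&Z''\\ \downarrow&&\downarrow&&\downarrow\\ X&\rightarrowtail&Y&\twoheadrightarrow&Z\\ \downarrow&&\downarrow{\scriptstyle f}&&\downarrow\\ A&\rightarrowtail&B&\twoheadrightarrow&C\end{array}$$ in which all rows and columns are conflations, the three upper vertical maps $X''\rightarrowtail X$, $Y''\rightarrowtail Y$, $Z''\rightarrowtail Z$ are $\mathcal{A}^{-1}$-inflations, and the bottom row lies in $\mathcal{A}$. Moreover, the upper left square is a pullback and the lower right square is a pushout.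
   Context: A conflation category is an additive category with a class of kernel-cokernel pairs (closed under isomorphisms) called conflations; first map an inflation, second a deflation. A deflation-exact category is a conflation category satisfying: (R0) $1_0$ is a deflation; (R1) composites of deflations are deflations; (R2) pullbacks of deflations along arbitrary morphisms exist and are deflations. A non-empty full subcategory $\mathcal{A}$ is admissibly deflation-percolating if: (A1) for every conflation $A'\rightarrowtail A\twoheadrightarrow A''$, $A\in\mathcal{A}$ iff $A',A''\in\mathcal{A}$; (A2) every morphism $C\to A$ with $A\in\mathcal{A}$ factors as a deflation $C\twoheadrightarrow A'$ followed by an inflation $A'\rightarrowtail A$ with $A'\in\mathcal{A}$; (A3) if $a\colon C\rightarrowtail D$ is an inflation and $b\colon C\twoheadrightarrow A$ a deflation with $A\in\mathcal{A}$, the pushout of $a$ along $b$ exists and yields a deflation $D\twoheadrightarrow P$ and an inflation $A\rightarrowtail P$. An $\mathcal{A}^{-1}$-inflation is an inflation whose cokernel lies in $\mathcal{A}$. *)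

theory Defs
  imports Main
begin

text \<open>A (large) category together with a preadditive structure on its hom-sets.
 Composition convention: Comp C g f is g after f (defined when Cod f = Dom g).\<close>

record ('o, 'm) cat =
  Ob    :: "'o set"
  Ar    :: "'m set"
  Dom   :: "'m \<Rightarrow> 'o"
  Cod   :: "'m \<Rightarrow> 'o"
  Comp  :: "'m \<Rightarrow> 'm \<Rightarrow> 'm"
  Ident :: "'o \<Rightarrow> 'm"
  Plus  :: "'m \<Rightarrow> 'm \<Rightarrow> 'm"
  Zer   :: "'o \<Rightarrow> 'o \<Rightarrow> 'm"

definition hom :: "('o,'m) cat \<Rightarrow> 'o \<Rightarrow> 'o \<Rightarrow> 'm set" where
  "hom C a b = {f \<in> Ar C. Dom C f = a \<and> Cod C f = b}"

definition category :: "('o,'m) cat \<Rightarrow> bool" where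
  "category C \<longleftrightarrow>
     (\<forall>f\<in>Ar C. Dom C f \<in> Ob C \<and> Cod C f \<in> Ob C) \<and>
     (\<forall>a\<in>Ob C. Ident C a \<in> hom C a a) \<and>
     (\<forall>f\<in>Ar C. \<forall>g\<in>Ar C. Cod C f = Dom C g \<longrightarrow> Comp C g f \<in> hom C (Dom C f) (Cod C g)) \<and>
     (\<forall>f\<in>Ar C. Comp C f (Ident C (Dom C f)) = f \<and> Comp C (Ident C (Cod C f)) f = f) \<and>
     (\<forall>f\<in>Ar C. \<forall>g\<in>Ar C. \<forall>h\<in>Ar C. Cod C f = Dom C g \<longrightarrow> Cod C g = Dom C h \<longrightarrow>
        Comp C h (Comp C g f) = Comp C (Comp C h g) f)"

definition preadditive :: "('o,'m) cat \<Rightarrow> bool" where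
  "preadditive C \<longleftrightarrow> category C \<and>
     (\<forall>a\<in>Ob C. \<forall>b\<in>Ob C.
        Zer C a b \<in> hom C a b \<and>
        (\<forall>f\<in>hom C a b. \<forall>g\<in>hom C a b. Plus C f g \<in> hom C a b) \<and>
        (\<forall>f\<in>hom C a b. \<forall>g\<in>hom C a b. \<forall>h\<in>hom C a b.
            Plus C (Plus C f g) h = Plus C f (Plus C g h)) \<and>
        (\<forall>f\<in>hom C a b. \<forall>g\<in>hom C a b. Plus C f g = Plus C g f) \<and>
        (\<forall>f\<in>hom C a b. Plus C f (Zer C a b) = f) \<and>
        (\<forall>f\<in>hom C a b. \<exists>g\<in>hom C a b. Plus C f g = Zer C a b)) \<and>
     (\<forall>a\<in>Ob C. \<forall>b\<in>Ob C. \<forall>c\<in>Ob C.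
        (\<forall>f\<in>hom C a b. \<forall>g\<in>hom C b c. \<forall>g'\<in>hom C b c.
            Comp C (Plus C g g') f = Plus C (Comp C g f) (Comp C g' f)) \<and>
        (\<forall>f\<in>hom C a b. \<forall>f'\<in>hom C a b. \<forall>g\<in>hom C b c.
            Comp C g (Plus C f f') = Plus C (Comp C g f) (Comp C g f')))"

definition is_zero_obj :: "('o,'m) cat \<Rightarrow> 'o \<Rightarrow> bool" where
  "is_zero_obj C z \<longleftrightarrow> z \<in> Ob C \<and>
     (\<forall>a\<in>Ob C. (\<exists>!f. f \<in> hom C z a) \<and> (\<exists>!f. f \<in> hom C a z))"

definition has_biproducts :: "('o,'m) cat \<Rightarrow> bool" where
  "has_biproducts C \<longleftrightarrow> (\<forall>a\<in>Ob C. \<forall>b\<in>Ob C. \<exists>s\<in>Ob C. \<exists>i1 i2 p1 p2.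
     i1 \<in> hom C a s \<and> i2 \<in> hom C b s \<and> p1 \<in> hom C s a \<and> p2 \<in> hom C s b \<and>
     Comp C p1 i1 = Ident C a \<and> Comp C p2 i2 = Ident C b \<and>
     Comp C p1 i2 = Zer C b a \<and> Comp C p2 i1 = Zer C a b \<and>
     Plus C (Comp C i1 p1) (Comp C i2 p2) = Ident C s)"

definition additive :: "('o,'m) cat \<Rightarrow> bool" where
  "additive C \<longleftrightarrow> preadditive C \<and> (\<exists>z. is_zero_obj C z) \<and> has_biproducts C"

definition iso :: "('o,'m) cat \<Rightarrow> 'm \<Rightarrow> bool" where
  "iso C f \<longleftrightarrow> f \<in> Ar C \<and> (\<exists>g\<in>hom C (Cod C f) (Dom C f).
      Comp C g f = Ident C (Dom C f) \<and> Comp C f g = Ident C (Cod C f))"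

definition is_kernel :: "('o,'m) cat \<Rightarrow> 'm \<Rightarrow> 'm \<Rightarrow> bool" where
  "is_kernel C k f \<longleftrightarrow> k \<in> Ar C \<and> f \<in> Ar C \<and> Cod C k = Dom C f \<and>
     Comp C f k = Zer C (Dom C k) (Cod C f) \<and>
     (\<forall>t\<in>Ob C. \<forall>g\<in>hom C t (Dom C f). Comp C f g = Zer C t (Cod C f) \<longrightarrow>
        (\<exists>!h. h \<in> hom C t (Dom C k) \<and> Comp C k h = g))"

definition is_cokernel :: "('o,'m) cat \<Rightarrow> 'm \<Rightarrow> 'm \<Rightarrow> bool" where
  "is_cokernel C c f \<longleftrightarrow> c \<in> Ar C \<and> f \<in> Ar C \<and> Dom C c = Cod C f \<and>
     Comp C c f = Zer C (Dom C f) (Cod C c) \<and>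
     (\<forall>t\<in>Ob C. \<forall>g\<in>hom C (Cod C f) t. Comp C g f = Zer C (Dom C f) t \<longrightarrow>
        (\<exists>!h. h \<in> hom C (Cod C c) t \<and> Comp C h c = g))"

definition kc_pair :: "('o,'m) cat \<Rightarrow> 'm \<Rightarrow> 'm \<Rightarrow> bool" where
  "kc_pair C i p \<longleftrightarrow> is_kernel C i p \<and> is_cokernel C p i"

text \<open>The commutative square  a: P \<rightarrow> B, b: P \<rightarrow> D, g: B \<rightarrow> T, f: D \<rightarrow> T
  (g \<circ> a = f \<circ> b) is a pullback of g along f.\<close>
definition is_pullback :: "('o,'m) cat \<Rightarrow> 'm \<Rightarrow> 'm \<Rightarrow> 'm \<Rightarrow> 'm \<Rightarrow> bool" where
  "is_pullback C g f a b \<longleftrightarrow>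
     g \<in> Ar C \<and> f \<in> Ar C \<and> a \<in> Ar C \<and> b \<in> Ar C \<and>
     Cod C g = Cod C f \<and> Dom C a = Dom C b \<and> Cod C a = Dom C g \<and> Cod C b = Dom C f \<and>
     Comp C g a = Comp C f b \<and>
     (\<forall>t\<in>Ob C. \<forall>x\<in>hom C t (Dom C g). \<forall>y\<in>hom C t (Dom C f). Comp C g x = Comp C f y \<longrightarrow>
        (\<exists>!h. h \<in> hom C t (Dom C a) \<and> Comp C a h = x \<and> Comp C b h = y))"

text \<open>The commutative square  g: S \<rightarrow> B, f: S \<rightarrow> D, a: B \<rightarrow> P, b: D \<rightarrow> P
  (a \<circ> g = b \<circ> f) is a pushout of g along f.\<close>
definition is_pushout :: "('o,'m) cat \<Rightarrow> 'm \<Rightarrow> 'm \<Rightarrow> 'm \<Rightarrow> 'm \<Rightarrow> bool" where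
  "is_pushout C g f a b \<longleftrightarrow>
     g \<in> Ar C \<and> f \<in> Ar C \<and> a \<in> Ar C \<and> b \<in> Ar C \<and>
     Dom C g = Dom C f \<and> Cod C a = Cod C b \<and> Dom C a = Cod C g \<and> Dom C b = Cod C f \<and>
     Comp C a g = Comp C b f \<and>
     (\<forall>t\<in>Ob C. \<forall>x\<in>hom C (Cod C g) t. \<forall>y\<in>hom C (Cod C f) t. Comp C x g = Comp C y f \<longrightarrow>
        (\<exists>!h. h \<in> hom C (Cod C a) t \<and> Comp C h a = x \<and> Comp C h b = y))"

text \<open>E is the class of conflations, given as pairs (inflation, deflation).\<close>

definition conflation_category :: "('o,'m) cat \<Rightarrow> ('m \<times> 'm) set \<Rightarrow> bool" where
  "conflation_category C E \<longleftrightarrow> additive C \<and>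
     (\<forall>(i,p)\<in>E. kc_pair C i p) \<and>
     (\<forall>i p i' p' a b c. (i,p) \<in> E \<and> i' \<in> Ar C \<and> p' \<in> Ar C \<and> Cod C i' = Dom C p' \<and>
        iso C a \<and> iso C b \<and> iso C c \<and>
        Dom C a = Dom C i \<and> Cod C a = Dom C i' \<and>
        Dom C b = Cod C i \<and> Cod C b = Cod C i' \<and>
        Dom C c = Cod C p \<and> Cod C c = Cod C p' \<and>
        Comp C b i = Comp C i' a \<and> Comp C c p = Comp C p' b \<longrightarrow> (i',p') \<in> E)"

definition inflation :: "('m \<times> 'm) set \<Rightarrow> 'm \<Rightarrow> bool" where
  "inflation E i \<longleftrightarrow> (\<exists>p. (i,p) \<in> E)"

definition deflation :: "('m \<times> 'm) set \<Rightarrow> 'm \<Rightarrow> bool" where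
  "deflation E p \<longleftrightarrow> (\<exists>i. (i,p) \<in> E)"

definition deflation_exact :: "('o,'m) cat \<Rightarrow> ('m \<times> 'm) set \<Rightarrow> bool" where
  "deflation_exact C E \<longleftrightarrow> conflation_category C E \<and>
     \<comment> \<open>R0\<close>
     (\<forall>z. is_zero_obj C z \<longrightarrow> deflation E (Ident C z)) \<and>
     \<comment> \<open>R1\<close>
     (\<forall>p q. deflation E p \<and> deflation E q \<and> Cod C p = Dom C q \<longrightarrow> deflation E (Comp C q p)) \<and>
     \<comment> \<open>R2\<close>
     (\<forall>p f. deflation E p \<and> f \<in> Ar C \<and> Cod C f = Cod C p \<longrightarrow>
        (\<exists>a b. is_pullback C p f a b \<and> deflation E b))"

definition adm_defl_percolating :: "('o,'m) cat \<Rightarrow> ('m \<times> 'm) set \<Rightarrow> 'o set \<Rightarrow> bool" where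
  "adm_defl_percolating C E \<A> \<longleftrightarrow> \<A> \<noteq> {} \<and> \<A> \<subseteq> Ob C \<and>
     \<comment> \<open>A1\<close>
     (\<forall>(i,p)\<in>E. Cod C i \<in> \<A> \<longleftrightarrow> (Dom C i \<in> \<A> \<and> Cod C p \<in> \<A>)) \<and>
     \<comment> \<open>A2\<close>
     (\<forall>f\<in>Ar C. Cod C f \<in> \<A> \<longrightarrow>
        (\<exists>d m. deflation E d \<and> inflation E m \<and> Dom C d = Dom C f \<and> Cod C d = Dom C m \<and>
               Cod C m = Cod C f \<and> Dom C m \<in> \<A> \<and> f = Comp C m d)) \<and>
     \<comment> \<open>A3\<close>
     (\<forall>a b. inflation E a \<and> deflation E b \<and> Dom C a = Dom C b \<and> Cod C b \<in> \<A> \<longrightarrow>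
        (\<exists>a' b'. is_pushout C a b a' b' \<and> deflation E a' \<and> inflation E b'))"

text \<open>In the pushout square of A3 (with the naming of is_pushout): a' : D \<rightarrow> P is the
  pushout of b (a deflation), b' : A \<rightarrow> P the pushout of a (an inflation).\<close>

definition A_inv_inflation :: "('o,'m) cat \<Rightarrow> ('m \<times> 'm) set \<Rightarrow> 'o set \<Rightarrow> 'm \<Rightarrow> bool" where
  "A_inv_inflation C E \<A> i \<longleftrightarrow> (\<exists>p. (i,p) \<in> E \<and> Cod C p \<in> \<A>)"

end

theory Submission
  imports Defs
begin


locale dex =
  fixes C :: "('o,'m) cat" and E :: "('m \<times> 'm) set" and AA :: "'o set"
  assumes dex: "deflation_exact C E" and perc: "adm_defl_percolating C E AA"
begin

abbreviation cmp (infixr "\<cdot>" 70) where "g \<cdot> f \<equiv> Comp C g f"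
abbreviation Hom where "Hom a b \<equiv> hom C a b"
abbreviation ZZ where "ZZ a b \<equiv> Zer C a b"
abbreviation idd where "idd a \<equiv> Ident C a"
abbreviation pl (infixl "\<oplus>" 65) where "f \<oplus> g \<equiv> Plus C f g"

lemma cc: "conflation_category C E" using dex unfolding deflation_exact_def by blast
lemma add: "additive C" using cc unfolding conflation_category_def by blast
lemma pre: "preadditive C" using add unfolding additive_def by blast
lemma cat: "category C" using pre unfolding preadditive_def by blast

lemma catc: "\<forall>f\<in>Ar C. Dom C f \<in> Ob C \<and> Cod C f \<in> Ob C"
  "\<forall>a\<in>Ob C. Ident C a \<in> hom C a a"
  "\<forall>f\<in>Ar C. \<forall>g\<in>Ar C. Cod C f = Dom C g \<longrightarrow> Comp C g f \<in> hom C (Dom C f) (Cod C g)"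
  "\<forall>f\<in>Ar C. Comp C f (Ident C (Dom C f)) = f \<and> Comp C (Ident C (Cod C f)) f = f"
  "\<forall>f\<in>Ar C. \<forall>g\<in>Ar C. \<forall>h\<in>Ar C. Cod C f = Dom C g \<longrightarrow> Cod C g = Dom C h \<longrightarrow>
        Comp C h (Comp C g f) = Comp C (Comp C h g) f"
  using cat unfolding category_def by simp_all

lemma homD: assumes "f \<in> Hom a b"
  shows "f \<in> Ar C" "Dom C f = a" "Cod C f = b" "a \<in> Ob C" "b \<in> Ob C"
  using assms catc(1) unfolding hom_def by auto

lemma homI: "f \<in> Ar C \<Longrightarrow> f \<in> Hom (Dom C f) (Cod C f)" unfolding hom_def by auto

lemma comp_hom: assumes "f \<in> Hom a b" "g \<in> Hom b c" shows "g \<cdot> f \<in> Hom a c"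
  using catc(3) homD[OF assms(1)] homD[OF assms(2)] by auto

lemma assoc: assumes "f \<in> Hom a b" "g \<in> Hom b c" "h \<in> Hom c d" shows "h \<cdot> (g \<cdot> f) = (h \<cdot> g) \<cdot> f"
  using catc(5) homD[OF assms(1)] homD[OF assms(2)] homD[OF assms(3)] by auto

lemma id_hom: "a \<in> Ob C \<Longrightarrow> idd a \<in> Hom a a" using catc(2) by auto
lemma id_l: assumes "f \<in> Hom a b" shows "idd b \<cdot> f = f" using catc(4) homD[OF assms] by auto
lemma id_r: assumes "f \<in> Hom a b" shows "f \<cdot> idd a = f" using catc(4) homD[OF assms] by auto

lemma prea: assumes "a \<in> Ob C" "b \<in> Ob C" shows
  "Zer C a b \<in> hom C a b"
  "\<forall>f\<in>hom C a b. \<forall>g\<in>hom C a b. Plus C f g \<in> hom C a b"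
  "\<forall>f\<in>hom C a b. \<forall>g\<in>hom C a b. \<forall>h\<in>hom C a b.
            Plus C (Plus C f g) h = Plus C f (Plus C g h)"
  "\<forall>f\<in>hom C a b. \<forall>g\<in>hom C a b. Plus C f g = Plus C g f"
  "\<forall>f\<in>hom C a b. Plus C f (Zer C a b) = f"
  "\<forall>f\<in>hom C a b. \<exists>g\<in>hom C a b. Plus C f g = Zer C a b"
proof -
  have "\<forall>a\<in>Ob C. \<forall>b\<in>Ob C.
        Zer C a b \<in> hom C a b \<and>
        (\<forall>f\<in>hom C a b. \<forall>g\<in>hom C a b. Plus C f g \<in> hom C a b) \<and>
        (\<forall>f\<in>hom C a b. \<forall>g\<in>hom C a b. \<forall>h\<in>hom C a b.
            Plus C (Plus C f g) h = Plus C f (Plus C g h)) \<and>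
        (\<forall>f\<in>hom C a b. \<forall>g\<in>hom C a b. Plus C f g = Plus C g f) \<and>
        (\<forall>f\<in>hom C a b. Plus C f (Zer C a b) = f) \<and>
        (\<forall>f\<in>hom C a b. \<exists>g\<in>hom C a b. Plus C f g = Zer C a b)"
    using pre unfolding preadditive_def by (elim conjE)
  then have "Zer C a b \<in> hom C a b \<and>
        (\<forall>f\<in>hom C a b. \<forall>g\<in>hom C a b. Plus C f g \<in> hom C a b) \<and>
        (\<forall>f\<in>hom C a b. \<forall>g\<in>hom C a b. \<forall>h\<in>hom C a b.
            Plus C (Plus C f g) h = Plus C f (Plus C g h)) \<and>
        (\<forall>f\<in>hom C a b. \<forall>g\<in>hom C a b. Plus C f g = Plus C g f) \<and>
        (\<forall>f\<in>hom C a b. Plus C f (Zer C a b) = f) \<and>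
        (\<forall>f\<in>hom C a b. \<exists>g\<in>hom C a b. Plus C f g = Zer C a b)" using assms by blast
  thus "Zer C a b \<in> hom C a b"
  "\<forall>f\<in>hom C a b. \<forall>g\<in>hom C a b. Plus C f g \<in> hom C a b"
  "\<forall>f\<in>hom C a b. \<forall>g\<in>hom C a b. \<forall>h\<in>hom C a b.
            Plus C (Plus C f g) h = Plus C f (Plus C g h)"
  "\<forall>f\<in>hom C a b. \<forall>g\<in>hom C a b. Plus C f g = Plus C g f"
  "\<forall>f\<in>hom C a b. Plus C f (Zer C a b) = f"
  "\<forall>f\<in>hom C a b. \<exists>g\<in>hom C a b. Plus C f g = Zer C a b" by blast+
qed

lemma preb: assumes "a \<in> Ob C" "b \<in> Ob C" "c \<in> Ob C" shows
   "\<forall>f\<in>hom C a b. \<forall>g\<in>hom C b c. \<forall>g'\<in>hom C b c.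
            Comp C (Plus C g g') f = Plus C (Comp C g f) (Comp C g' f)"
   "\<forall>f\<in>hom C a b. \<forall>f'\<in>hom C a b. \<forall>g\<in>hom C b c.
            Comp C g (Plus C f f') = Plus C (Comp C g f) (Comp C g f')"
proof -
  have "\<forall>a\<in>Ob C. \<forall>b\<in>Ob C. \<forall>c\<in>Ob C.
        (\<forall>f\<in>hom C a b. \<forall>g\<in>hom C b c. \<forall>g'\<in>hom C b c.
            Comp C (Plus C g g') f = Plus C (Comp C g f) (Comp C g' f)) \<and>
        (\<forall>f\<in>hom C a b. \<forall>f'\<in>hom C a b. \<forall>g\<in>hom C b c.
            Comp C g (Plus C f f') = Plus C (Comp C g f) (Comp C g f'))"
    using pre unfolding preadditive_def by (elim conjE)
  then have "(\<forall>f\<in>hom C a b. \<forall>g\<in>hom C b c. \<forall>g'\<in>hom C b c.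
            Comp C (Plus C g g') f = Plus C (Comp C g f) (Comp C g' f)) \<and>
        (\<forall>f\<in>hom C a b. \<forall>f'\<in>hom C a b. \<forall>g\<in>hom C b c.
            Comp C g (Plus C f f') = Plus C (Comp C g f) (Comp C g f'))" using assms by blast
  thus "\<forall>f\<in>hom C a b. \<forall>g\<in>hom C b c. \<forall>g'\<in>hom C b c.
            Comp C (Plus C g g') f = Plus C (Comp C g f) (Comp C g' f)"
   "\<forall>f\<in>hom C a b. \<forall>f'\<in>hom C a b. \<forall>g\<in>hom C b c.
            Comp C g (Plus C f f') = Plus C (Comp C g f) (Comp C g f')" by blast+
qed

lemma zer_hom: "a \<in> Ob C \<Longrightarrow> b \<in> Ob C \<Longrightarrow> ZZ a b \<in> Hom a b"
  using prea by blast

lemma plus_hom: assumes "f \<in> Hom a b" "g \<in> Hom a b" shows "f \<oplus> g \<in> Hom a b"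
  using prea(2)[OF homD(4,5)[OF assms(1)]] assms by blast

lemma plus_assoc: assumes "f \<in> Hom a b" "g \<in> Hom a b" "h \<in> Hom a b"
  shows "(f \<oplus> g) \<oplus> h = f \<oplus> (g \<oplus> h)"
  using prea(3)[OF homD(4,5)[OF assms(1)]] assms by blast

lemma plus_comm: assumes "f \<in> Hom a b" "g \<in> Hom a b" shows "f \<oplus> g = g \<oplus> f"
  using prea(4)[OF homD(4,5)[OF assms(1)]] assms by blast

lemma plus_zero: assumes "f \<in> Hom a b" shows "f \<oplus> ZZ a b = f"
  using prea(5)[OF homD(4,5)[OF assms(1)]] assms by blast

lemma plus_zero_l: assumes "f \<in> Hom a b" shows "ZZ a b \<oplus> f = f"
  using plus_comm[OF zer_hom[OF homD(4,5)[OF assms]] assms] plus_zero[OF assms] by simp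

lemma neg_ex: assumes "f \<in> Hom a b" shows "\<exists>g\<in>Hom a b. f \<oplus> g = ZZ a b"
  using prea(6)[OF homD(4,5)[OF assms(1)]] assms by blast

lemma dist_l: assumes "f \<in> Hom a b" "g \<in> Hom b c" "g' \<in> Hom b c"
  shows "(g \<oplus> g') \<cdot> f = g \<cdot> f \<oplus> g' \<cdot> f"
  using preb(1)[OF homD(4,5)[OF assms(1)] homD(5)[OF assms(2)]] assms by blast

lemma dist_r: assumes "f \<in> Hom a b" "f' \<in> Hom a b" "g \<in> Hom b c"
  shows "g \<cdot> (f \<oplus> f') = g \<cdot> f \<oplus> g \<cdot> f'"
  using preb(2)[OF homD(4,5)[OF assms(1)] homD(5)[OF assms(3)]] assms by blast

lemma idem_zero: assumes "x \<in> Hom a b" "x = x \<oplus> x" shows "x = ZZ a b"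
proof -
  obtain y where y: "y \<in> Hom a b" "x \<oplus> y = ZZ a b" using neg_ex[OF assms(1)] by blast
  have "ZZ a b = (x \<oplus> x) \<oplus> y" using y assms by simp
  also have "\<dots> = x \<oplus> (x \<oplus> y)" using plus_assoc assms y by blast
  also have "\<dots> = x" using y plus_zero assms by simp
  finally show ?thesis by simp
qed

lemma zero_comp: assumes "f \<in> Hom a b" "c \<in> Ob C" shows "ZZ b c \<cdot> f = ZZ a c"
proof -
  have b: "b \<in> Ob C" using homD assms by auto
  have z: "ZZ b c \<in> Hom b c" using zer_hom b assms by auto
  have x: "ZZ b c \<cdot> f \<in> Hom a c" using comp_hom assms z by blast
  have "ZZ b c \<cdot> f = (ZZ b c \<oplus> ZZ b c) \<cdot> f" using plus_zero[OF z] by simp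
  also have "\<dots> = ZZ b c \<cdot> f \<oplus> ZZ b c \<cdot> f" using dist_l assms z by blast
  finally show ?thesis using idem_zero[OF x] by blast
qed

lemma comp_zero: assumes "g \<in> Hom b c" "a \<in> Ob C" shows "g \<cdot> ZZ a b = ZZ a c"
proof -
  have b: "b \<in> Ob C" using homD assms by auto
  have z: "ZZ a b \<in> Hom a b" using zer_hom b assms by auto
  have x: "g \<cdot> ZZ a b \<in> Hom a c" using comp_hom assms z by blast
  have "g \<cdot> ZZ a b = g \<cdot> (ZZ a b \<oplus> ZZ a b)" using plus_zero[OF z] by simp
  also have "\<dots> = g \<cdot> ZZ a b \<oplus> g \<cdot> ZZ a b" using dist_r assms z by blast
  finally show ?thesis using idem_zero[OF x] by blast
qed

definition mono_ar where
  "mono_ar k \<longleftrightarrow> (\<forall>t h1 h2. h1 \<in> Hom t (Dom C k) \<longrightarrow> h2 \<in> Hom t (Dom C k) \<longrightarrow> k \<cdot> h1 = k \<cdot> h2 \<longrightarrow> h1 = h2)"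
definition epi_ar where
  "epi_ar c \<longleftrightarrow> (\<forall>t h1 h2. h1 \<in> Hom (Cod C c) t \<longrightarrow> h2 \<in> Hom (Cod C c) t \<longrightarrow> h1 \<cdot> c = h2 \<cdot> c \<longrightarrow> h1 = h2)"

lemma monoD: "mono_ar k \<Longrightarrow> k \<in> Hom a b \<Longrightarrow> h1 \<in> Hom t a \<Longrightarrow> h2 \<in> Hom t a \<Longrightarrow> k \<cdot> h1 = k \<cdot> h2 \<Longrightarrow> h1 = h2"
  unfolding mono_ar_def using homD by blast
lemma epiD: "epi_ar c \<Longrightarrow> c \<in> Hom a b \<Longrightarrow> h1 \<in> Hom b t \<Longrightarrow> h2 \<in> Hom b t \<Longrightarrow> h1 \<cdot> c = h2 \<cdot> c \<Longrightarrow> h1 = h2"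
  unfolding epi_ar_def using homD by blast

lemma mono_comp: assumes "f \<in> Hom a b" "g \<in> Hom b c" "mono_ar f" "mono_ar g" shows "mono_ar (g \<cdot> f)"
  unfolding mono_ar_def
proof (intro allI impI)
  fix t h1 h2 assume h: "h1 \<in> Hom t (Dom C (g \<cdot> f))" "h2 \<in> Hom t (Dom C (g \<cdot> f))" "(g \<cdot> f) \<cdot> h1 = (g \<cdot> f) \<cdot> h2"
  have d: "Dom C (g \<cdot> f) = a" using comp_hom[OF assms(1,2)] homD by blast
  have "g \<cdot> (f \<cdot> h1) = g \<cdot> (f \<cdot> h2)" using h d assoc assms by metis
  hence "f \<cdot> h1 = f \<cdot> h2" using monoD[OF assms(4,2)] comp_hom assms h d by metis
  thus "h1 = h2" using monoD[OF assms(3,1)] h d by metis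
qed

lemma mono_cancel: assumes "f \<in> Hom a b" "g \<in> Hom b c" "mono_ar (g \<cdot> f)" shows "mono_ar f"
  unfolding mono_ar_def
proof (intro allI impI)
  fix t h1 h2 assume h: "h1 \<in> Hom t (Dom C f)" "h2 \<in> Hom t (Dom C f)" "f \<cdot> h1 = f \<cdot> h2"
  have d: "Dom C f = a" using assms homD by blast
  have "(g \<cdot> f) \<cdot> h1 = (g \<cdot> f) \<cdot> h2" using h d assoc assms by metis
  thus "h1 = h2" using monoD[OF assms(3) comp_hom[OF assms(1,2)]] h d by metis
qed


end

context dex begin

lemma ex1_eq: "\<exists>!x. P x \<Longrightarrow> P a \<Longrightarrow> P b \<Longrightarrow> a = b" by blast


lemma kerD: assumes "is_kernel C k f"
  shows "k \<in> Hom (Dom C k) (Dom C f)" "f \<in> Hom (Dom C f) (Cod C f)" "f \<cdot> k = ZZ (Dom C k) (Cod C f)"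
proof -
  have "k \<in> Ar C" "f \<in> Ar C" "Cod C k = Dom C f" "f \<cdot> k = ZZ (Dom C k) (Cod C f)"
    using assms unfolding is_kernel_def by blast+
  thus "k \<in> Hom (Dom C k) (Dom C f)" "f \<in> Hom (Dom C f) (Cod C f)" "f \<cdot> k = ZZ (Dom C k) (Cod C f)"
    unfolding hom_def by auto
qed

lemma ker_univ: assumes "is_kernel C k f" "g \<in> Hom t (Dom C f)" "f \<cdot> g = ZZ t (Cod C f)"
  shows "\<exists>!h. h \<in> Hom t (Dom C k) \<and> k \<cdot> h = g"
proof -
  have t: "t \<in> Ob C" using homD(4)[OF assms(2)] .
  have "\<forall>t\<in>Ob C. \<forall>g\<in>hom C t (Dom C f). Comp C f g = Zer C t (Cod C f) \<longrightarrow>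
        (\<exists>!h. h \<in> hom C t (Dom C k) \<and> Comp C k h = g)"
    using assms(1) unfolding is_kernel_def by (elim conjE)
  thus ?thesis using t assms(2,3) by blast
qed

lemma ker_factor: assumes "is_kernel C k f" "g \<in> Hom t (Dom C f)" "f \<cdot> g = ZZ t (Cod C f)"
  shows "\<exists>h\<in>Hom t (Dom C k). k \<cdot> h = g"
  using ker_univ[OF assms] by blast

lemma ker_mono: assumes "is_kernel C k f" shows "mono_ar k"
  unfolding mono_ar_def
proof (intro allI impI)
  fix t h1 h2 assume h: "h1 \<in> Hom t (Dom C k)" "h2 \<in> Hom t (Dom C k)" "k \<cdot> h1 = k \<cdot> h2"
  note kd = kerD[OF assms]
  have g: "k \<cdot> h1 \<in> Hom t (Dom C f)" using comp_hom[OF h(1) kd(1)] .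
  have "f \<cdot> (k \<cdot> h1) = (f \<cdot> k) \<cdot> h1" using assoc[OF h(1) kd(1) kd(2)] .
  also have "\<dots> = ZZ t (Cod C f)" using kd(3) zero_comp[OF h(1) homD(5)[OF kd(2)]] by simp
  finally have fz: "f \<cdot> (k \<cdot> h1) = ZZ t (Cod C f)" .
  show "h1 = h2" apply (rule ex1_eq[OF ker_univ[OF assms g fz]]) using h by simp_all
qed

lemma cokerD: assumes "is_cokernel C c f"
  shows "c \<in> Hom (Cod C f) (Cod C c)" "f \<in> Hom (Dom C f) (Cod C f)" "c \<cdot> f = ZZ (Dom C f) (Cod C c)"
proof -
  have "c \<in> Ar C" "f \<in> Ar C" "Dom C c = Cod C f" "c \<cdot> f = ZZ (Dom C f) (Cod C c)"
    using assms unfolding is_cokernel_def by blast+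
  thus "c \<in> Hom (Cod C f) (Cod C c)" "f \<in> Hom (Dom C f) (Cod C f)" "c \<cdot> f = ZZ (Dom C f) (Cod C c)"
    unfolding hom_def by auto
qed

lemma coker_univ: assumes "is_cokernel C c f" "g \<in> Hom (Cod C f) t" "g \<cdot> f = ZZ (Dom C f) t"
  shows "\<exists>!h. h \<in> Hom (Cod C c) t \<and> h \<cdot> c = g"
proof -
  have t: "t \<in> Ob C" using homD(5)[OF assms(2)] .
  have "\<forall>t\<in>Ob C. \<forall>g\<in>hom C (Cod C f) t. Comp C g f = Zer C (Dom C f) t \<longrightarrow>
        (\<exists>!h. h \<in> hom C (Cod C c) t \<and> Comp C h c = g)"
    using assms(1) unfolding is_cokernel_def by (elim conjE)
  thus ?thesis using t assms(2,3) by blast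
qed

lemma coker_factor: assumes "is_cokernel C c f" "g \<in> Hom (Cod C f) t" "g \<cdot> f = ZZ (Dom C f) t"
  shows "\<exists>h\<in>Hom (Cod C c) t. h \<cdot> c = g"
  using coker_univ[OF assms] by blast

lemma coker_epi: assumes "is_cokernel C c f" shows "epi_ar c"
  unfolding epi_ar_def
proof (intro allI impI)
  fix t h1 h2 assume h: "h1 \<in> Hom (Cod C c) t" "h2 \<in> Hom (Cod C c) t" "h1 \<cdot> c = h2 \<cdot> c"
  note kd = cokerD[OF assms]
  have g: "h1 \<cdot> c \<in> Hom (Cod C f) t" using comp_hom[OF kd(1) h(1)] .
  have "(h1 \<cdot> c) \<cdot> f = h1 \<cdot> (c \<cdot> f)" using assoc[OF kd(2) kd(1) h(1)] by simp
  also have "\<dots> = ZZ (Dom C f) t" using kd(3) comp_zero[OF h(1) homD(4)[OF kd(2)]] by simp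
  finally have fz: "(h1 \<cdot> c) \<cdot> f = ZZ (Dom C f) t" .
  show "h1 = h2" apply (rule ex1_eq[OF coker_univ[OF assms g fz]]) using h by simp_all
qed

lemma E_kc: assumes "(i,p) \<in> E" shows "kc_pair C i p"
proof -
  have "\<forall>(i,p)\<in>E. kc_pair C i p" using cc unfolding conflation_category_def by (elim conjE)
  from bspec[OF this assms] show ?thesis by simp
qed
lemma E_ker: "(i,p) \<in> E \<Longrightarrow> is_kernel C i p" using E_kc unfolding kc_pair_def by simp
lemma E_coker: "(i,p) \<in> E \<Longrightarrow> is_cokernel C p i" using E_kc unfolding kc_pair_def by simp
lemma E_homs: assumes "(i,p) \<in> E"
  shows "i \<in> Hom (Dom C i) (Dom C p)" "p \<in> Hom (Dom C p) (Cod C p)" "p \<cdot> i = ZZ (Dom C i) (Cod C p)"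
  using kerD[OF E_ker[OF assms]] by auto
lemma E_mono: "(i,p) \<in> E \<Longrightarrow> mono_ar i" using E_ker ker_mono by blast
lemma E_epi: "(i,p) \<in> E \<Longrightarrow> epi_ar p" using E_coker coker_epi by blast

lemma closure:
  assumes "(i,p) \<in> E" "i' \<in> Ar C" "p' \<in> Ar C" "Cod C i' = Dom C p'" "iso C a" "iso C b" "iso C c"
    "Dom C a = Dom C i" "Cod C a = Dom C i'" "Dom C b = Cod C i" "Cod C b = Cod C i'"
    "Dom C c = Cod C p" "Cod C c = Cod C p'" "b \<cdot> i = i' \<cdot> a" "c \<cdot> p = p' \<cdot> b"
  shows "(i',p') \<in> E"
proof -
  have "\<forall>i p i' p' a b c. (i,p) \<in> E \<and> i' \<in> Ar C \<and> p' \<in> Ar C \<and> Cod C i' = Dom C p' \<and>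
        iso C a \<and> iso C b \<and> iso C c \<and>
        Dom C a = Dom C i \<and> Cod C a = Dom C i' \<and>
        Dom C b = Cod C i \<and> Cod C b = Cod C i' \<and>
        Dom C c = Cod C p \<and> Cod C c = Cod C p' \<and>
        Comp C b i = Comp C i' a \<and> Comp C c p = Comp C p' b \<longrightarrow> (i',p') \<in> E"
    using cc unfolding conflation_category_def by (elim conjE)
  note H = this
  show ?thesis
    apply (rule mp[OF spec[OF spec[OF spec[OF spec[OF spec[OF spec[OF spec[OF H, of i], of p], of i'], of p'], of a], of b], of c]])
    using assms by (intro conjI)
qed

lemma isoI: assumes "f \<in> Hom a b" "g \<in> Hom b a" "g \<cdot> f = idd a" "f \<cdot> g = idd b" shows "iso C f"
  unfolding iso_def using assms homD[OF assms(1)] by auto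

lemma id_iso: "a \<in> Ob C \<Longrightarrow> iso C (idd a)"
  using isoI[OF id_hom id_hom] id_l[OF id_hom] by blast

lemma ker_replace: assumes kq: "(k,q) \<in> E" and k': "is_kernel C k' q" shows "(k',q) \<in> E"
proof -
  note h = E_homs[OF kq] and h' = kerD[OF k']
  obtain phi where phi: "phi \<in> Hom (Dom C k) (Dom C k')" "k' \<cdot> phi = k"
    using ker_factor[OF k' h(1)] h(3) by blast
  obtain psi where psi: "psi \<in> Hom (Dom C k') (Dom C k)" "k \<cdot> psi = k'"
    using ker_factor[OF E_ker[OF kq] h'(1)] h'(3) by blast
  have Dk: "Dom C k \<in> Ob C" "Dom C k' \<in> Ob C" using homD(4)[OF h(1)] homD(4)[OF h'(1)] .
  have "k \<cdot> (psi \<cdot> phi) = k \<cdot> idd (Dom C k)"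
    using assoc[OF phi(1) psi(1) h(1)] phi(2) psi(2) id_r[OF h(1)] by simp
  hence i1: "psi \<cdot> phi = idd (Dom C k)"
    using monoD[OF E_mono[OF kq] h(1) comp_hom[OF phi(1) psi(1)] id_hom[OF Dk(1)]] by simp
  have "k' \<cdot> (phi \<cdot> psi) = k' \<cdot> idd (Dom C k')"
    using assoc[OF psi(1) phi(1) h'(1)] phi(2) psi(2) id_r[OF h'(1)] by simp
  hence i2: "phi \<cdot> psi = idd (Dom C k')"
    using monoD[OF ker_mono[OF k'] h'(1) comp_hom[OF psi(1) phi(1)] id_hom[OF Dk(2)]] by simp
  have iso: "iso C phi" using isoI[OF phi(1) psi(1) i1 i2] .
  have D: "Dom C q \<in> Ob C" "Cod C q \<in> Ob C" using homD(4,5)[OF h(2)] .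
  have I1: "idd (Dom C q) \<in> Hom (Dom C q) (Dom C q)" "idd (Cod C q) \<in> Hom (Cod C q) (Cod C q)"
    using id_hom D by auto
  show ?thesis
    apply (rule closure[OF kq, of k' q phi "idd (Dom C q)" "idd (Cod C q)"])
    apply (rule homD(1)[OF h'(1)])
    apply (rule homD(1)[OF h(2)])
    apply (rule homD(3)[OF h'(1)])
    apply (rule iso)
    apply (rule id_iso[OF D(1)])
    apply (rule id_iso[OF D(2)])
    apply (rule homD(2)[OF phi(1)])
    apply (rule homD(3)[OF phi(1)])
    apply (simp only: homD(2)[OF I1(1)] homD(3)[OF h(1)])
    apply (simp only: homD(3)[OF I1(1)] homD(3)[OF h'(1)])
    apply (rule homD(2)[OF I1(2)])
    apply (rule homD(3)[OF I1(2)])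
    apply (simp only: id_l[OF h(1)] phi(2))
    apply (simp only: id_l[OF h(2)] id_r[OF h(2)])
    done
qed

lemma defl_homs: assumes "deflation E d" shows "d \<in> Hom (Dom C d) (Cod C d)"
  using assms E_homs unfolding deflation_def by blast
lemma infl_homs: assumes "inflation E d" shows "d \<in> Hom (Dom C d) (Cod C d)"
proof -
  obtain p where dp: "(d,p) \<in> E" using assms unfolding inflation_def by blast
  from E_homs(1)[OF dp] show ?thesis using homD(2)[OF E_homs(2)[OF dp]] homD(3)[OF E_homs(1)[OF dp]] by simp
qed

lemma iso_comp_defl: assumes d: "deflation E d" and m: "m \<in> Hom (Cod C d) v" "m' \<in> Hom v (Cod C d)"
  "m' \<cdot> m = idd (Cod C d)" "m \<cdot> m' = idd v"
  shows "deflation E (m \<cdot> d)"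
proof -
  obtain k where k: "(k,d) \<in> E" using d unfolding deflation_def by blast
  note h = E_homs[OF k]
  have D: "Dom C d \<in> Ob C" "Dom C k \<in> Ob C" using homD(4)[OF h(2)] homD(4)[OF h(1)] by auto
  have "(k, m \<cdot> d) \<in> E"
    apply (rule closure[OF k, of k "m \<cdot> d" "idd (Dom C k)" "idd (Dom C d)" m])
    using h m D isoI[OF m] id_iso comp_hom[OF h(2) m(1)] homD[OF id_hom[OF D(1)]] homD[OF id_hom[OF D(2)]] homD[OF h(1)] homD[OF h(2)] homD[OF m(1)]
      homD[OF comp_hom[OF h(2) m(1)]] id_hom id_l[OF h(1)] id_r[OF h(1)] id_r[OF comp_hom[OF h(2) m(1)]]
    by auto
  thus ?thesis unfolding deflation_def by blast
qed

lemma defl_comp_iso: assumes d: "deflation E d" and m: "m \<in> Hom u (Dom C d)" "m' \<in> Hom (Dom C d) u"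
  "m' \<cdot> m = idd u" "m \<cdot> m' = idd (Dom C d)"
  shows "deflation E (d \<cdot> m)"
proof -
  obtain k where k: "(k,d) \<in> E" using d unfolding deflation_def by blast
  note h = E_homs[OF k]
  have D: "Dom C d \<in> Ob C" "Dom C k \<in> Ob C" "Cod C d \<in> Ob C" using homD(4)[OF h(2)] homD(4)[OF h(1)] homD(5)[OF h(2)] by auto
  have e1: "(d \<cdot> m) \<cdot> m' = d" using assoc[OF m(2) m(1) h(2)] m(4) id_r[OF h(2)] by simp
  have "(m' \<cdot> k, d \<cdot> m) \<in> E"
    apply (rule closure[OF k, of "m' \<cdot> k" "d \<cdot> m" "idd (Dom C k)" m' "idd (Cod C d)"])
    using h m D isoI[OF m(2,1,4,3)] id_iso homD[OF id_hom[OF D(3)]] homD[OF id_hom[OF D(2)]] comp_hom[OF h(1) m(2)] comp_hom[OF m(1) h(2)] homD[OF h(1)] homD[OF h(2)] homD[OF m(1)] homD[OF m(2)]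
      homD[OF comp_hom[OF h(1) m(2)]] homD[OF comp_hom[OF m(1) h(2)]] id_r[OF comp_hom[OF h(1) m(2)]] id_l[OF h(2)] e1
    by auto
  thus ?thesis unfolding deflation_def by blast
qed


lemma R1: assumes "deflation E p" "deflation E q" "Cod C p = Dom C q" shows "deflation E (q \<cdot> p)"
proof -
  have "\<forall>p q. deflation E p \<and> deflation E q \<and> Cod C p = Dom C q \<longrightarrow> deflation E (Comp C q p)"
    using dex unfolding deflation_exact_def by (elim conjE)
  thus ?thesis using assms by blast
qed

lemma R2: assumes "deflation E p" "f \<in> Ar C" "Cod C f = Cod C p"
  shows "\<exists>a b. is_pullback C p f a b \<and> deflation E b"
proof -
  have "\<forall>p f. deflation E p \<and> f \<in> Ar C \<and> Cod C f = Cod C p \<longrightarrow>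
        (\<exists>a b. is_pullback C p f a b \<and> deflation E b)"
    using dex unfolding deflation_exact_def by (elim conjE)
  thus ?thesis using assms by blast
qed

lemma A1: assumes "(i,p) \<in> E" shows "Cod C i \<in> AA \<longleftrightarrow> (Dom C i \<in> AA \<and> Cod C p \<in> AA)"
proof -
  have "\<forall>(i,p)\<in>E. Cod C i \<in> AA \<longleftrightarrow> (Dom C i \<in> AA \<and> Cod C p \<in> AA)"
    using perc unfolding adm_defl_percolating_def by (elim conjE)
  from bspec[OF this assms] show ?thesis by simp
qed

lemma A2: assumes "f \<in> Ar C" "Cod C f \<in> AA"
  shows "\<exists>d m. deflation E d \<and> inflation E m \<and> Dom C d = Dom C f \<and> Cod C d = Dom C m \<and>
               Cod C m = Cod C f \<and> Dom C m \<in> AA \<and> f = m \<cdot> d"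
proof -
  have "\<forall>f\<in>Ar C. Cod C f \<in> AA \<longrightarrow>
        (\<exists>d m. deflation E d \<and> inflation E m \<and> Dom C d = Dom C f \<and> Cod C d = Dom C m \<and>
               Cod C m = Cod C f \<and> Dom C m \<in> AA \<and> f = Comp C m d)"
    using perc unfolding adm_defl_percolating_def by (elim conjE)
  thus ?thesis using assms by blast
qed

lemma A3: assumes "inflation E a" "deflation E b" "Dom C a = Dom C b" "Cod C b \<in> AA"
  shows "\<exists>a' b'. is_pushout C a b a' b' \<and> deflation E a' \<and> inflation E b'"
proof -
  have "\<forall>a b. inflation E a \<and> deflation E b \<and> Dom C a = Dom C b \<and> Cod C b \<in> AA \<longrightarrow>
        (\<exists>a' b'. is_pushout C a b a' b' \<and> deflation E a' \<and> inflation E b')"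
    using perc unfolding adm_defl_percolating_def by (elim conjE)
  thus ?thesis using assms by blast
qed

lemma pbD: assumes "is_pullback C g f a b"
  shows "a \<in> Hom (Dom C a) (Dom C g)" "b \<in> Hom (Dom C a) (Dom C f)" "g \<cdot> a = f \<cdot> b"
    "g \<in> Hom (Dom C g) (Cod C g)" "f \<in> Hom (Dom C f) (Cod C g)"
proof -
  have "g \<in> Ar C \<and> f \<in> Ar C \<and> a \<in> Ar C \<and> b \<in> Ar C \<and>
     Cod C g = Cod C f \<and> Dom C a = Dom C b \<and> Cod C a = Dom C g \<and> Cod C b = Dom C f \<and>
     g \<cdot> a = f \<cdot> b" using assms unfolding is_pullback_def by (elim conjE) (intro conjI; assumption)
  thus "a \<in> Hom (Dom C a) (Dom C g)" "b \<in> Hom (Dom C a) (Dom C f)" "g \<cdot> a = f \<cdot> b"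
    "g \<in> Hom (Dom C g) (Cod C g)" "f \<in> Hom (Dom C f) (Cod C g)" unfolding hom_def by auto
qed

lemma pb_univ: assumes "is_pullback C g f a b" "x \<in> Hom t (Dom C g)" "y \<in> Hom t (Dom C f)" "g \<cdot> x = f \<cdot> y"
  shows "\<exists>!h. h \<in> Hom t (Dom C a) \<and> a \<cdot> h = x \<and> b \<cdot> h = y"
proof -
  have t: "t \<in> Ob C" using homD(4)[OF assms(2)] .
  have "\<forall>t\<in>Ob C. \<forall>x\<in>hom C t (Dom C g). \<forall>y\<in>hom C t (Dom C f). Comp C g x = Comp C f y \<longrightarrow>
        (\<exists>!h. h \<in> hom C t (Dom C a) \<and> Comp C a h = x \<and> Comp C b h = y)"
    using assms(1) unfolding is_pullback_def by (elim conjE)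
  thus ?thesis using t assms(2,3,4) by blast
qed

lemma poD: assumes "is_pushout C g f a b"
  shows "a \<in> Hom (Cod C g) (Cod C a)" "b \<in> Hom (Cod C f) (Cod C a)" "a \<cdot> g = b \<cdot> f"
    "g \<in> Hom (Dom C g) (Cod C g)" "f \<in> Hom (Dom C g) (Cod C f)"
proof -
  have "g \<in> Ar C \<and> f \<in> Ar C \<and> a \<in> Ar C \<and> b \<in> Ar C \<and>
     Dom C g = Dom C f \<and> Cod C a = Cod C b \<and> Dom C a = Cod C g \<and> Dom C b = Cod C f \<and>
     a \<cdot> g = b \<cdot> f" using assms unfolding is_pushout_def by (elim conjE) (intro conjI; assumption)
  thus "a \<in> Hom (Cod C g) (Cod C a)" "b \<in> Hom (Cod C f) (Cod C a)" "a \<cdot> g = b \<cdot> f"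
    "g \<in> Hom (Dom C g) (Cod C g)" "f \<in> Hom (Dom C g) (Cod C f)" unfolding hom_def by auto
qed

lemma po_univ: assumes "is_pushout C g f a b" "x \<in> Hom (Cod C g) t" "y \<in> Hom (Cod C f) t" "x \<cdot> g = y \<cdot> f"
  shows "\<exists>!h. h \<in> Hom (Cod C a) t \<and> h \<cdot> a = x \<and> h \<cdot> b = y"
proof -
  have t: "t \<in> Ob C" using homD(5)[OF assms(2)] .
  have "\<forall>t\<in>Ob C. \<forall>x\<in>hom C (Cod C g) t. \<forall>y\<in>hom C (Cod C f) t. Comp C x g = Comp C y f \<longrightarrow>
        (\<exists>!h. h \<in> hom C (Cod C a) t \<and> Comp C h a = x \<and> Comp C h b = y)"
    using assms(1) unfolding is_pushout_def by (elim conjE)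
  thus ?thesis using t assms(2,3,4) by blast
qed

lemma pb_mono: assumes pb: "is_pullback C g f a b" and m: "mono_ar f" shows "mono_ar a"
  unfolding mono_ar_def
proof (intro allI impI)
  fix t h1 h2 assume h: "h1 \<in> Hom t (Dom C a)" "h2 \<in> Hom t (Dom C a)" "a \<cdot> h1 = a \<cdot> h2"
  note d = pbD[OF pb]
  have x: "a \<cdot> h1 \<in> Hom t (Dom C g)" using comp_hom[OF h(1) d(1)] .
  have y1: "b \<cdot> h1 \<in> Hom t (Dom C f)" using comp_hom[OF h(1) d(2)] .
  have y2: "b \<cdot> h2 \<in> Hom t (Dom C f)" using comp_hom[OF h(2) d(2)] .
  have "f \<cdot> (b \<cdot> h1) = (g \<cdot> a) \<cdot> h1" using assoc[OF h(1) d(2) d(5)] d(3) by simp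
  also have "\<dots> = g \<cdot> (a \<cdot> h1)" using assoc[OF h(1) d(1) d(4)] by simp
  also have "\<dots> = g \<cdot> (a \<cdot> h2)" using h(3) by simp
  also have "\<dots> = (g \<cdot> a) \<cdot> h2" using assoc[OF h(2) d(1) d(4)] by simp
  also have "\<dots> = f \<cdot> (b \<cdot> h2)" using assoc[OF h(2) d(2) d(5)] d(3) by simp
  finally have "b \<cdot> h1 = b \<cdot> h2" using monoD[OF m d(5) y1 y2] by simp
  have e1: "g \<cdot> (a \<cdot> h1) = f \<cdot> (b \<cdot> h1)" using assoc[OF h(1) d(2) d(5)] d(3) assoc[OF h(1) d(1) d(4)] by simp
  show "h1 = h2" apply (rule ex1_eq[OF pb_univ[OF pb x y1 e1]]) using h \<open>b \<cdot> h1 = b \<cdot> h2\<close> by simp_all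
qed

lemma infl_defl_iso: assumes mi: "inflation E m" and m: "m \<in> Hom U V" and g: "g \<in> Hom T U"
  and q: "deflation E (m \<cdot> g)"
  shows "\<exists>h\<in>Hom V U. h \<cdot> m = idd U \<and> m \<cdot> h = idd V"
proof -
  obtain q' where mq: "(m,q') \<in> E" using mi unfolding inflation_def by blast
  have mm: "mono_ar m" using E_mono[OF mq] .
  obtain k where kq: "(k, m \<cdot> g) \<in> E" using q unfolding deflation_def by blast
  have qh: "m \<cdot> g \<in> Hom T V" using comp_hom[OF g m] .
  note kh = E_homs[OF kq]
  have kh1: "k \<in> Hom (Dom C k) T" using kh(1) homD(2)[OF qh] by simp
  have kz: "(m \<cdot> g) \<cdot> k = ZZ (Dom C k) V" using kh(3) homD(3)[OF qh] by simp
  have K: "Dom C k \<in> Ob C" using homD(4)[OF kh1] .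
  have "m \<cdot> (g \<cdot> k) = m \<cdot> ZZ (Dom C k) U"
    using assoc[OF kh1 g m] kz comp_zero[OF m K] by simp
  hence gk: "g \<cdot> k = ZZ (Dom C k) U"
    using monoD[OF mm m comp_hom[OF kh1 g] zer_hom[OF K homD(4)[OF m]]] by simp
  have ck: "is_cokernel C (m \<cdot> g) k" using E_coker[OF kq] .
  have ckc: "Cod C k = T" "Cod C (m \<cdot> g) = V" using homD(3)[OF kh1] homD(3)[OF qh] by auto
  obtain h where h: "h \<in> Hom V U" "h \<cdot> (m \<cdot> g) = g"
    using coker_factor[OF ck, of g U] g gk ckc by auto
  have "(m \<cdot> h) \<cdot> (m \<cdot> g) = idd V \<cdot> (m \<cdot> g)"
    using assoc[OF qh h(1) m] h(2) id_l[OF qh] by simp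
  hence mh: "m \<cdot> h = idd V"
    using epiD[OF E_epi[OF kq] qh comp_hom[OF h(1) m] id_hom[OF homD(5)[OF m]]] by simp
  have "m \<cdot> (h \<cdot> m) = m \<cdot> idd U"
    using assoc[OF m h(1) m] mh id_l[OF m] id_r[OF m] by simp
  hence "h \<cdot> m = idd U"
    using monoD[OF mm m comp_hom[OF m h(1)] id_hom[OF homD(4)[OF m]]] by simp
  thus ?thesis using h(1) mh by blast
qed

end

context dex begin

lemma E_given_p: assumes "(i,p) \<in> E" "p \<in> Hom y z" shows "i \<in> Hom (Dom C i) y" "p \<cdot> i = ZZ (Dom C i) z"
  using E_homs[OF assms(1)] homD(2,3)[OF assms(2)] by auto

lemma E_given_i: assumes "(i,p) \<in> E" "i \<in> Hom x y" shows "p \<in> Hom y (Cod C p)" "p \<cdot> i = ZZ x (Cod C p)"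
  using E_homs[OF assms(1)] homD(2,3)[OF assms(2)] homD(3)[OF E_homs(1)[OF assms(1)]] by auto

lemma is_kernelI: assumes k: "k \<in> Hom a b" and f: "f \<in> Hom b c" and z: "f \<cdot> k = ZZ a c"
  and ex: "\<And>t g. g \<in> Hom t b \<Longrightarrow> f \<cdot> g = ZZ t c \<Longrightarrow> \<exists>h\<in>Hom t a. k \<cdot> h = g"
  and m: "mono_ar k"
  shows "is_kernel C k f"
proof -
  have U: "\<forall>t\<in>Ob C. \<forall>g\<in>Hom t b. f \<cdot> g = ZZ t c \<longrightarrow> (\<exists>!h. h \<in> Hom t a \<and> k \<cdot> h = g)"
  proof (intro ballI impI)
    fix t g assume tg: "t \<in> Ob C" "g \<in> Hom t b" "f \<cdot> g = ZZ t c"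
    then obtain h where h: "h \<in> Hom t a" "k \<cdot> h = g" using ex by blast
    show "\<exists>!h. h \<in> Hom t a \<and> k \<cdot> h = g"
    proof (rule ex1I[of _ h])
      show "h \<in> Hom t a \<and> k \<cdot> h = g" using h by simp
      fix h' assume h': "h' \<in> Hom t a \<and> k \<cdot> h' = g"
      hence "k \<cdot> h' = k \<cdot> h" using h by simp
      thus "h' = h" using monoD[OF m k, of h' t h] h' h by simp
    qed
  qed
  show ?thesis unfolding is_kernel_def homD(2,3)[OF k] homD(2,3)[OF f]
    using homD(1)[OF k] homD(1)[OF f] z U by simp
qed

lemma is_pullbackI: assumes g: "g \<in> Hom x z" and f: "f \<in> Hom y z" and a: "a \<in> Hom w x" and b: "b \<in> Hom w y"
  and comm: "g \<cdot> a = f \<cdot> b"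
  and ex: "\<And>t u v. u \<in> Hom t x \<Longrightarrow> v \<in> Hom t y \<Longrightarrow> g \<cdot> u = f \<cdot> v \<Longrightarrow> \<exists>h\<in>Hom t w. a \<cdot> h = u \<and> b \<cdot> h = v"
  and m: "mono_ar a"
  shows "is_pullback C g f a b"
proof -
  have U: "\<forall>t\<in>Ob C. \<forall>u\<in>Hom t x. \<forall>v\<in>Hom t y. g \<cdot> u = f \<cdot> v \<longrightarrow> (\<exists>!h. h \<in> Hom t w \<and> a \<cdot> h = u \<and> b \<cdot> h = v)"
  proof (intro ballI impI)
    fix t u v assume tg: "t \<in> Ob C" "u \<in> Hom t x" "v \<in> Hom t y" "g \<cdot> u = f \<cdot> v"
    then obtain h where h: "h \<in> Hom t w" "a \<cdot> h = u" "b \<cdot> h = v" using ex by blast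
    show "\<exists>!h. h \<in> Hom t w \<and> a \<cdot> h = u \<and> b \<cdot> h = v"
    proof (rule ex1I[of _ h])
      show "h \<in> Hom t w \<and> a \<cdot> h = u \<and> b \<cdot> h = v" using h by simp
      fix h' assume h': "h' \<in> Hom t w \<and> a \<cdot> h' = u \<and> b \<cdot> h' = v"
      hence "a \<cdot> h' = a \<cdot> h" using h by simp
      thus "h' = h" using monoD[OF m a, of h' t h] h' h by simp
    qed
  qed
  show ?thesis unfolding is_pullback_def homD(2,3)[OF g] homD(2,3)[OF f] homD(2,3)[OF a] homD(2,3)[OF b]
    using homD(1)[OF g] homD(1)[OF f] homD(1)[OF a] homD(1)[OF b] comm U
    by simp
qed

lemma is_pushoutI: assumes g: "g \<in> Hom s x" and f: "f \<in> Hom s y" and a: "a \<in> Hom x q" and b: "b \<in> Hom y q"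
  and comm: "a \<cdot> g = b \<cdot> f"
  and ex: "\<And>t u v. u \<in> Hom x t \<Longrightarrow> v \<in> Hom y t \<Longrightarrow> u \<cdot> g = v \<cdot> f \<Longrightarrow> \<exists>h\<in>Hom q t. h \<cdot> a = u \<and> h \<cdot> b = v"
  and m: "epi_ar b"
  shows "is_pushout C g f a b"
proof -
  have U: "\<forall>t\<in>Ob C. \<forall>u\<in>Hom x t. \<forall>v\<in>Hom y t. u \<cdot> g = v \<cdot> f \<longrightarrow> (\<exists>!h. h \<in> Hom q t \<and> h \<cdot> a = u \<and> h \<cdot> b = v)"
  proof (intro ballI impI)
    fix t u v assume tg: "t \<in> Ob C" "u \<in> Hom x t" "v \<in> Hom y t" "u \<cdot> g = v \<cdot> f"
    then obtain h where h: "h \<in> Hom q t" "h \<cdot> a = u" "h \<cdot> b = v" using ex by blast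
    show "\<exists>!h. h \<in> Hom q t \<and> h \<cdot> a = u \<and> h \<cdot> b = v"
    proof (rule ex1I[of _ h])
      show "h \<in> Hom q t \<and> h \<cdot> a = u \<and> h \<cdot> b = v" using h by simp
      fix h' assume h': "h' \<in> Hom q t \<and> h' \<cdot> a = u \<and> h' \<cdot> b = v"
      hence "h' \<cdot> b = h \<cdot> b" using h by simp
      thus "h' = h" using epiD[OF m b, of h' t h] h' h by simp
    qed
  qed
  show ?thesis unfolding is_pushout_def homD(2,3)[OF g] homD(2,3)[OF f] homD(2,3)[OF a] homD(2,3)[OF b]
    using homD(1)[OF g] homD(1)[OF f] homD(1)[OF a] homD(1)[OF b] comm U
    by simp
qed


lemma main:
  assumes ip: "(i, p) \<in> E" and ih: "i \<in> Hom X Y" and ph: "p \<in> Hom Y Z"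
    and fd: "deflation E f" and fh: "f \<in> Hom Y B" and BA: "B \<in> AA"
  shows "\<exists>X2 Y2 Z2 A0 C0 i2 p2 a c uX uY uZ vX vZ.
     i2 \<in> hom C X2 Y2 \<and> p2 \<in> hom C Y2 Z2 \<and> (i2, p2) \<in> E \<and>
     a \<in> hom C A0 B \<and> c \<in> hom C B C0 \<and> (a, c) \<in> E \<and>
     A0 \<in> AA \<and> B \<in> AA \<and> C0 \<in> AA \<and>
     uX \<in> hom C X2 X \<and> vX \<in> hom C X A0 \<and> (uX, vX) \<in> E \<and>
     uY \<in> hom C Y2 Y \<and> (uY, f) \<in> E \<and>
     uZ \<in> hom C Z2 Z \<and> vZ \<in> hom C Z C0 \<and> (uZ, vZ) \<in> E \<and>
     A_inv_inflation C E AA uX \<and> A_inv_inflation C E AA uY \<and> A_inv_inflation C E AA uZ \<and>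
     Comp C i uX = Comp C uY i2 \<and> Comp C p uY = Comp C uZ p2 \<and>
     Comp C f i = Comp C a vX \<and> Comp C vZ p = Comp C c f \<and>
     is_pullback C i uY uX i2 \<and> is_pushout C p f vZ c"
proof -
  have Xo: "X \<in> Ob C" and Yo: "Y \<in> Ob C" and Zo: "Z \<in> Ob C" and Bo: "B \<in> Ob C"
    using homD(4,5)[OF ih] homD(5)[OF ph] homD(5)[OF fh] by auto
  have im: "mono_ar i" using E_mono[OF ip] .
  have pe: "epi_ar p" using E_epi[OF ip] .
  have pi0: "p \<cdot> i = ZZ X Z" using E_homs(3)[OF ip] homD(2)[OF ih] homD(3)[OF ph] by simp
  have pd: "deflation E p" using ip unfolding deflation_def by blast
  obtain uY where uYf: "(uY, f) \<in> E" using fd unfolding deflation_def by blast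
  define Y2 where "Y2 = Dom C uY"
  have uYh: "uY \<in> Hom Y2 Y" and fuY: "f \<cdot> uY = ZZ Y2 B"
    using E_given_p[OF uYf fh] unfolding Y2_def by auto
  have uYm: "mono_ar uY" using E_mono[OF uYf] .
  have Y2o: "Y2 \<in> Ob C" using homD(4)[OF uYh] .
  have fih: "f \<cdot> i \<in> Hom X B" using comp_hom[OF ih fh] .
  obtain vX a where vXa: "deflation E vX" "inflation E a" "Dom C vX = Dom C (f \<cdot> i)"
    "Cod C vX = Dom C a" "Cod C a = Cod C (f \<cdot> i)" "Dom C a \<in> AA" "f \<cdot> i = a \<cdot> vX"
    using A2[OF homD(1)[OF fih]] homD(3)[OF fih] BA by auto
  define A0 where "A0 = Dom C a"
  have vXh: "vX \<in> Hom X A0" using defl_homs[OF vXa(1)] vXa(3,4) homD(2)[OF fih] unfolding A0_def by simp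
  have ah: "a \<in> Hom A0 B" using infl_homs[OF vXa(2)] vXa(5) homD(3)[OF fih] unfolding A0_def by simp
  have A0A: "A0 \<in> AA" using vXa(6) unfolding A0_def .
  have fia: "f \<cdot> i = a \<cdot> vX" using vXa(7) .
  have A0o: "A0 \<in> Ob C" using homD(4)[OF ah] .
  obtain uX where uXv: "(uX, vX) \<in> E" using vXa(1) unfolding deflation_def by blast
  define X2 where "X2 = Dom C uX"
  have uXh: "uX \<in> Hom X2 X" and vuX: "vX \<cdot> uX = ZZ X2 A0"
    using E_given_p[OF uXv vXh] unfolding X2_def by auto
  have uXm: "mono_ar uX" using E_mono[OF uXv] .
  have vXe: "epi_ar vX" using E_epi[OF uXv] .
  have X2o: "X2 \<in> Ob C" using homD(4)[OF uXh] .
  obtain c where ac: "(a, c) \<in> E" using vXa(2) unfolding inflation_def by blast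
  define C0 where "C0 = Cod C c"
  have ch: "c \<in> Hom B C0" and ca: "c \<cdot> a = ZZ A0 C0"
    using E_given_i[OF ac ah] unfolding C0_def by auto
  have C0A: "C0 \<in> AA" using A1[OF ac] homD(3)[OF ah] BA unfolding C0_def by simp
  have am: "mono_ar a" using E_mono[OF ac] .
  have ce: "epi_ar c" using E_epi[OF ac] .
  have C0o: "C0 \<in> Ob C" using homD(5)[OF ch] .
  have cfh: "c \<cdot> f \<in> Hom Y C0" using comp_hom[OF fh ch] .
  have cfi: "(c \<cdot> f) \<cdot> i = ZZ X C0"
  proof -
    have "(c \<cdot> f) \<cdot> i = c \<cdot> (f \<cdot> i)" using assoc[OF ih fh ch] by simp
    also have "\<dots> = c \<cdot> (a \<cdot> vX)" using fia by simp
    also have "\<dots> = (c \<cdot> a) \<cdot> vX" using assoc[OF vXh ah ch] .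
    also have "\<dots> = ZZ X C0" using ca zero_comp[OF vXh C0o] by simp
    finally show ?thesis .
  qed
  obtain vZ where vZh: "vZ \<in> Hom Z C0" and vZp: "vZ \<cdot> p = c \<cdot> f"
    using coker_factor[OF E_coker[OF ip], of "c \<cdot> f" C0] cfh cfi homD(2,3)[OF ih] homD(3)[OF ph] by auto
  have cd: "deflation E c" using ac unfolding deflation_def by blast
  have cfd: "deflation E (c \<cdot> f)" using R1[OF fd cd] homD(3)[OF fh] homD(2)[OF ch] by simp
  obtain d m' where dm: "deflation E d" "inflation E m'" "Dom C d = Dom C vZ" "Cod C d = Dom C m'"
    "Cod C m' = Cod C vZ" "Dom C m' \<in> AA" "vZ = m' \<cdot> d"
    using A2[OF homD(1)[OF vZh]] homD(3)[OF vZh] C0A by auto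
  define W where "W = Dom C m'"
  have dh: "d \<in> Hom Z W" using defl_homs[OF dm(1)] dm(3,4) homD(2)[OF vZh] unfolding W_def by simp
  have m'h: "m' \<in> Hom W C0" using infl_homs[OF dm(2)] dm(5) homD(3)[OF vZh] unfolding W_def by simp
  have dph: "d \<cdot> p \<in> Hom Y W" using comp_hom[OF ph dh] .
  have "m' \<cdot> (d \<cdot> p) = c \<cdot> f" using assoc[OF ph dh m'h] dm(7) vZp by simp
  hence "deflation E (m' \<cdot> (d \<cdot> p))" using cfd by simp
  then obtain hh where hh: "hh \<in> Hom C0 W" "hh \<cdot> m' = idd W" "m' \<cdot> hh = idd C0"
    using infl_defl_iso[OF dm(2) m'h dph] by blast
  have vZd: "deflation E vZ"
    using iso_comp_defl[OF dm(1), of m' C0 hh] m'h hh homD(3)[OF dh] dm(7) by simp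
  obtain uZ where uZv: "(uZ, vZ) \<in> E" using vZd unfolding deflation_def by blast
  define Z2 where "Z2 = Dom C uZ"
  have uZh: "uZ \<in> Hom Z2 Z" and vuZ: "vZ \<cdot> uZ = ZZ Z2 C0"
    using E_given_p[OF uZv vZh] unfolding Z2_def by auto
  have uZm: "mono_ar uZ" using E_mono[OF uZv] .
  have Z2o: "Z2 \<in> Ob C" using homD(4)[OF uZh] .
  obtain w p'' where pb1: "is_pullback C p uZ w p''" and p''d: "deflation E p''"
    using R2[OF pd homD(1)[OF uZh]] homD(3)[OF uZh] homD(3)[OF ph] by auto
  define P where "P = Dom C w"
  have wh: "w \<in> Hom P Y" using pbD(1)[OF pb1] homD(2)[OF ph] unfolding P_def by simp
  have p''h: "p'' \<in> Hom P Z2" using pbD(2)[OF pb1] homD(2)[OF uZh] unfolding P_def by simp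
  have pw: "p \<cdot> w = uZ \<cdot> p''" using pbD(3)[OF pb1] .
  have Po: "P \<in> Ob C" using homD(4)[OF wh] .
  have wm: "mono_ar w" using pb_mono[OF pb1 uZm] .
  have "\<exists>!h. h \<in> Hom X (Dom C w) \<and> w \<cdot> h = i \<and> p'' \<cdot> h = ZZ X Z2"
    apply (rule pb_univ[OF pb1])
    using ih homD(2)[OF ph] zer_hom[OF Xo Z2o] homD(2)[OF uZh] pi0 comp_zero[OF uZh Xo] by auto
  then obtain i'' where i''h: "i'' \<in> Hom X P" "w \<cdot> i'' = i" "p'' \<cdot> i'' = ZZ X Z2"
    unfolding P_def by blast
  have i''m: "mono_ar i''" using mono_cancel[OF i''h(1) wh] i''h(2) im by simp
  have FP1: "\<exists>x\<in>Hom t X. i'' \<cdot> x = y" if yh: "y \<in> Hom t P" and yz: "p'' \<cdot> y = ZZ t Z2" for t y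
  proof -
    have to: "t \<in> Ob C" using homD(4)[OF yh] .
    have "p \<cdot> (w \<cdot> y) = (uZ \<cdot> p'') \<cdot> y" using assoc[OF yh wh ph] pw by simp
    also have "\<dots> = uZ \<cdot> (p'' \<cdot> y)" using assoc[OF yh p''h uZh] by simp
    also have "\<dots> = ZZ t Z" using yz comp_zero[OF uZh to] by simp
    finally have "p \<cdot> (w \<cdot> y) = ZZ t Z" .
    then obtain x where x: "x \<in> Hom t X" "i \<cdot> x = w \<cdot> y"
      using ker_factor[OF E_ker[OF ip], of "w \<cdot> y" t] comp_hom[OF yh wh] homD(2,3)[OF ph] homD(2)[OF ih] by auto
    have "w \<cdot> (i'' \<cdot> x) = w \<cdot> y" using assoc[OF x(1) i''h(1) wh] i''h(2) x(2) by simp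
    hence "i'' \<cdot> x = y" using monoD[OF wm wh comp_hom[OF x(1) i''h(1)] yh] by simp
    thus ?thesis using x(1) by blast
  qed
  have i''ker: "is_kernel C i'' p''"
    by (rule is_kernelI[OF i''h(1) p''h i''h(3) FP1 i''m])
  obtain k'' where "(k'', p'') \<in> E" using p''d unfolding deflation_def by blast
  hence i''p'': "(i'', p'') \<in> E" using ker_replace i''ker by blast
  have p''e: "epi_ar p''" using E_epi[OF i''p''] .
  have i''i: "inflation E i''" using i''p'' unfolding inflation_def by blast
  have fwh: "f \<cdot> w \<in> Hom P B" using comp_hom[OF wh fh] .
  have cfw: "c \<cdot> (f \<cdot> w) = ZZ P C0"
  proof -
    have "c \<cdot> (f \<cdot> w) = (vZ \<cdot> p) \<cdot> w" using assoc[OF wh fh ch] vZp by simp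
    also have "\<dots> = vZ \<cdot> (uZ \<cdot> p'')" using assoc[OF wh ph vZh] pw by simp
    also have "\<dots> = (vZ \<cdot> uZ) \<cdot> p''" using assoc[OF p''h uZh vZh] .
    also have "\<dots> = ZZ P C0" using vuZ zero_comp[OF p''h C0o] by simp
    finally show ?thesis .
  qed
  obtain g where gh: "g \<in> Hom P A0" and ag: "a \<cdot> g = f \<cdot> w"
    using ker_factor[OF E_ker[OF ac], of "f \<cdot> w" P] fwh cfw homD(2,3)[OF ch] unfolding A0_def by auto
  have gi'': "g \<cdot> i'' = vX"
  proof -
    have "a \<cdot> (g \<cdot> i'') = (f \<cdot> w) \<cdot> i''" using assoc[OF i''h(1) gh ah] ag by simp
    also have "\<dots> = f \<cdot> i" using assoc[OF i''h(1) wh fh] i''h(2) by simp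
    finally have "a \<cdot> (g \<cdot> i'') = a \<cdot> vX" using fia by simp
    thus ?thesis using monoD[OF am ah comp_hom[OF i''h(1) gh] vXh] by simp
  qed
  have "vZ \<cdot> (p \<cdot> uY) = ZZ Y2 C0"
  proof -
    have "vZ \<cdot> (p \<cdot> uY) = (c \<cdot> f) \<cdot> uY" using assoc[OF uYh ph vZh] vZp by simp
    also have "\<dots> = c \<cdot> (f \<cdot> uY)" using assoc[OF uYh fh ch] by simp
    also have "\<dots> = ZZ Y2 C0" using fuY comp_zero[OF ch Y2o] by simp
    finally show ?thesis .
  qed
  then obtain p2 where p2h: "p2 \<in> Hom Y2 Z2" and uZp2: "uZ \<cdot> p2 = p \<cdot> uY"
    using ker_factor[OF E_ker[OF uZv], of "p \<cdot> uY" Y2] comp_hom[OF uYh ph] homD(2,3)[OF vZh] unfolding Z2_def by auto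
  have "\<exists>!h. h \<in> Hom Y2 (Dom C w) \<and> w \<cdot> h = uY \<and> p'' \<cdot> h = p2"
    apply (rule pb_univ[OF pb1])
    using uYh homD(2)[OF ph] p2h homD(2)[OF uZh] uZp2 by auto
  then obtain j where jh: "j \<in> Hom Y2 P" and wj: "w \<cdot> j = uY" and p''j: "p'' \<cdot> j = p2"
    unfolding P_def by blast
  have gj: "g \<cdot> j = ZZ Y2 A0"
  proof -
    have "a \<cdot> (g \<cdot> j) = (f \<cdot> w) \<cdot> j" using assoc[OF jh gh ah] ag by simp
    also have "\<dots> = f \<cdot> uY" using assoc[OF jh wh fh] wj by simp
    finally have "a \<cdot> (g \<cdot> j) = a \<cdot> ZZ Y2 A0" using fuY comp_zero[OF ah Y2o] by simp
    thus ?thesis using monoD[OF am ah comp_hom[OF jh gh] zer_hom[OF Y2o A0o]] by simp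
  qed
  have FP2: "\<exists>h\<in>Hom t Y2. j \<cdot> h = x" if xh: "x \<in> Hom t P" and gx: "g \<cdot> x = ZZ t A0" for t x
  proof -
    have to: "t \<in> Ob C" using homD(4)[OF xh] .
    have "f \<cdot> (w \<cdot> x) = (a \<cdot> g) \<cdot> x" using assoc[OF xh wh fh] ag by simp
    also have "\<dots> = a \<cdot> (g \<cdot> x)" using assoc[OF xh gh ah] by simp
    also have "\<dots> = ZZ t B" using gx comp_zero[OF ah to] by simp
    finally have "f \<cdot> (w \<cdot> x) = ZZ t B" .
    then obtain h where h: "h \<in> Hom t Y2" "uY \<cdot> h = w \<cdot> x"
      using ker_factor[OF E_ker[OF uYf], of "w \<cdot> x" t] comp_hom[OF xh wh] homD(2,3)[OF fh] unfolding Y2_def by auto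
    have "w \<cdot> (j \<cdot> h) = w \<cdot> x" using assoc[OF h(1) jh wh] wj h(2) by simp
    hence "j \<cdot> h = x" using monoD[OF wm wh comp_hom[OF h(1) jh] xh] by simp
    thus ?thesis using h(1) by blast
  qed
  have jm: "mono_ar j" using mono_cancel[OF jh wh] wj uYm by simp
  have "f \<cdot> (i \<cdot> uX) = ZZ X2 B"
  proof -
    have "f \<cdot> (i \<cdot> uX) = (a \<cdot> vX) \<cdot> uX" using assoc[OF uXh ih fh] fia by simp
    also have "\<dots> = a \<cdot> (vX \<cdot> uX)" using assoc[OF uXh vXh ah] by simp
    also have "\<dots> = ZZ X2 B" using vuX comp_zero[OF ah X2o] by simp
    finally show ?thesis .
  qed
  then obtain i2 where i2h: "i2 \<in> Hom X2 Y2" and uYi2: "uY \<cdot> i2 = i \<cdot> uX"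
    using ker_factor[OF E_ker[OF uYf], of "i \<cdot> uX" X2] comp_hom[OF uXh ih] homD(2,3)[OF fh] unfolding Y2_def by auto
  obtain e m where po: "is_pushout C i'' vX e m" and ed: "deflation E e" and mi: "inflation E m"
    using A3[OF i''i vXa(1)] homD(2)[OF i''h(1)] homD(2,3)[OF vXh] A0A by auto
  define Q where "Q = Cod C e"
  have eh: "e \<in> Hom P Q" using poD(1)[OF po] homD(3)[OF i''h(1)] unfolding Q_def by simp
  have mh: "m \<in> Hom A0 Q" using poD(2)[OF po] homD(3)[OF vXh] unfolding Q_def by simp
  have ei: "e \<cdot> i'' = m \<cdot> vX" using poD(3)[OF po] .
  have Qo: "Q \<in> Ob C" using homD(5)[OF eh] .
  have "\<exists>!h. h \<in> Hom (Cod C e) A0 \<and> h \<cdot> e = g \<and> h \<cdot> m = idd A0"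
    apply (rule po_univ[OF po])
    using gh homD(3)[OF i''h(1)] id_hom[OF A0o] homD(3)[OF vXh] gi'' id_l[OF vXh] by auto
  then obtain r where rh: "r \<in> Hom Q A0" and re: "r \<cdot> e = g" and rm: "r \<cdot> m = idd A0"
    unfolding Q_def by blast
  have "\<exists>!h. h \<in> Hom (Cod C e) Z2 \<and> h \<cdot> e = p'' \<and> h \<cdot> m = ZZ A0 Z2"
    apply (rule po_univ[OF po])
    using p''h homD(3)[OF i''h(1)] zer_hom[OF A0o Z2o] homD(3)[OF vXh] i''h(3) zero_comp[OF vXh Z2o] by auto
  then obtain s where sh: "s \<in> Hom Q Z2" and se: "s \<cdot> e = p''" and sm: "s \<cdot> m = ZZ A0 Z2"
    unfolding Q_def by blast
  obtain ng where ngh: "ng \<in> Hom P A0" and gng: "g \<oplus> ng = ZZ P A0" using neg_ex[OF gh] by blast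
  have mngh: "m \<cdot> ng \<in> Hom P Q" using comp_hom[OF ngh mh] .
  have ngi: "ng \<cdot> i'' \<in> Hom X A0" using comp_hom[OF i''h(1) ngh] .
  have vng: "vX \<oplus> ng \<cdot> i'' = ZZ X A0"
  proof -
    have "vX \<oplus> ng \<cdot> i'' = (g \<oplus> ng) \<cdot> i''" using dist_l[OF i''h(1) gh ngh] gi'' by simp
    also have "\<dots> = ZZ X A0" using gng zero_comp[OF i''h(1) A0o] by simp
    finally show ?thesis .
  qed
  define h0 where "h0 = e \<oplus> m \<cdot> ng"
  have h0h: "h0 \<in> Hom P Q" unfolding h0_def using plus_hom[OF eh mngh] .
  have h0i: "h0 \<cdot> i'' = ZZ X Q"
  proof -
    have "h0 \<cdot> i'' = e \<cdot> i'' \<oplus> (m \<cdot> ng) \<cdot> i''" unfolding h0_def using dist_l[OF i''h(1) eh mngh] .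
    also have "\<dots> = m \<cdot> vX \<oplus> m \<cdot> (ng \<cdot> i'')" using ei assoc[OF i''h(1) ngh mh] by simp
    also have "\<dots> = m \<cdot> (vX \<oplus> ng \<cdot> i'')" using dist_r[OF vXh ngi mh] by simp
    also have "\<dots> = ZZ X Q" using vng comp_zero[OF mh Xo] by simp
    finally show ?thesis .
  qed
  obtain n where nh: "n \<in> Hom Z2 Q" and np: "n \<cdot> p'' = h0"
    using coker_factor[OF E_coker[OF i''p''], of h0 Q] h0h h0i homD(2,3)[OF i''h(1)] homD(3)[OF p''h] by auto
  have rn: "r \<cdot> n = ZZ Z2 A0"
  proof -
    have "(r \<cdot> n) \<cdot> p'' = r \<cdot> h0" using assoc[OF p''h nh rh] np by simp
    also have "\<dots> = r \<cdot> e \<oplus> r \<cdot> (m \<cdot> ng)" unfolding h0_def using dist_r[OF eh mngh rh] .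
    also have "\<dots> = g \<oplus> ng" using re assoc[OF ngh mh rh] rm id_l[OF ngh] by simp
    also have "\<dots> = ZZ Z2 A0 \<cdot> p''" using gng zero_comp[OF p''h A0o] by simp
    finally show ?thesis using epiD[OF p''e p''h comp_hom[OF nh rh] zer_hom[OF Z2o A0o]] by simp
  qed
  have sn: "s \<cdot> n = idd Z2"
  proof -
    have "(s \<cdot> n) \<cdot> p'' = s \<cdot> h0" using assoc[OF p''h nh sh] np by simp
    also have "\<dots> = s \<cdot> e \<oplus> s \<cdot> (m \<cdot> ng)" unfolding h0_def using dist_r[OF eh mngh sh] .
    also have "\<dots> = p'' \<oplus> ZZ P Z2" using se assoc[OF ngh mh sh] sm zero_comp[OF ngh Z2o] by simp
    also have "\<dots> = idd Z2 \<cdot> p''" using plus_zero[OF p''h] id_l[OF p''h] by simp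
    finally show ?thesis using epiD[OF p''e p''h comp_hom[OF nh sh] id_hom[OF Z2o]] by simp
  qed
  have ngj: "ng \<cdot> j = ZZ Y2 A0"
  proof -
    have "ng \<cdot> j = (g \<oplus> ng) \<cdot> j"
      using dist_l[OF jh gh ngh] gj plus_zero_l[OF comp_hom[OF jh ngh]] by simp
    also have "\<dots> = ZZ Y2 A0" using gng zero_comp[OF jh A0o] by simp
    finally show ?thesis .
  qed
  have ejn: "e \<cdot> j = n \<cdot> p2"
  proof -
    have "n \<cdot> p2 = h0 \<cdot> j" using assoc[OF jh p''h nh] np p''j by simp
    also have "\<dots> = e \<cdot> j \<oplus> (m \<cdot> ng) \<cdot> j" unfolding h0_def using dist_l[OF jh eh mngh] .
    also have "\<dots> = e \<cdot> j \<oplus> ZZ Y2 Q" using assoc[OF jh ngh mh] ngj comp_zero[OF mh Y2o] by simp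
    also have "\<dots> = e \<cdot> j" using plus_zero[OF comp_hom[OF jh eh]] .
    finally show ?thesis by simp
  qed
  have PBP: "\<exists>h\<in>Hom t Y2. j \<cdot> h = x \<and> p2 \<cdot> h = y"
    if xh: "x \<in> Hom t P" and yh: "y \<in> Hom t Z2" and exy: "e \<cdot> x = n \<cdot> y" for t x y
  proof -
    have to: "t \<in> Ob C" using homD(4)[OF xh] .
    have "g \<cdot> x = r \<cdot> (e \<cdot> x)" using assoc[OF xh eh rh] re by simp
    also have "\<dots> = (r \<cdot> n) \<cdot> y" using exy assoc[OF yh nh rh] by simp
    also have "\<dots> = ZZ t A0" using rn zero_comp[OF yh A0o] by simp
    finally obtain h where h: "h \<in> Hom t Y2" "j \<cdot> h = x" using FP2[OF xh] by blast
    have "p2 \<cdot> h = p'' \<cdot> x" using assoc[OF h(1) jh p''h] p''j h(2) by simp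
    also have "\<dots> = s \<cdot> (e \<cdot> x)" using assoc[OF xh eh sh] se by simp
    also have "\<dots> = (s \<cdot> n) \<cdot> y" using exy assoc[OF yh nh sh] by simp
    also have "\<dots> = y" using sn id_l[OF yh] by simp
    finally show ?thesis using h by blast
  qed
  obtain a0 b0 where pb2: "is_pullback C e n a0 b0" and b0d: "deflation E b0"
    using R2[OF ed homD(1)[OF nh]] homD(3)[OF nh] homD(3)[OF eh] by auto
  define Pb where "Pb = Dom C a0"
  have a0h: "a0 \<in> Hom Pb P" using pbD(1)[OF pb2] homD(2)[OF eh] unfolding Pb_def by simp
  have b0h: "b0 \<in> Hom Pb Z2" using pbD(2)[OF pb2] homD(2)[OF nh] unfolding Pb_def by simp
  have ea0: "e \<cdot> a0 = n \<cdot> b0" using pbD(3)[OF pb2] .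
  have Pbo: "Pb \<in> Ob C" using homD(4)[OF a0h] .
  have a0h': "a0 \<in> Hom Pb (Dom C e)" and b0h': "b0 \<in> Hom Pb (Dom C n)"
    using a0h b0h homD(2)[OF eh] homD(2)[OF nh] by auto
  have "\<exists>!h. h \<in> Hom Y2 (Dom C a0) \<and> a0 \<cdot> h = j \<and> b0 \<cdot> h = p2"
    apply (rule pb_univ[OF pb2])
    using jh homD(2)[OF eh] p2h homD(2)[OF nh] ejn by auto
  then obtain psi where psih: "psi \<in> Hom Y2 Pb" and a0psi: "a0 \<cdot> psi = j" and b0psi: "b0 \<cdot> psi = p2"
    unfolding Pb_def by blast
  obtain chi where chih: "chi \<in> Hom Pb Y2" and jchi: "j \<cdot> chi = a0" and p2chi: "p2 \<cdot> chi = b0"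
    using PBP[OF a0h b0h ea0] by blast
  have U2: "\<exists>!h. h \<in> Hom Pb (Dom C a0) \<and> a0 \<cdot> h = a0 \<and> b0 \<cdot> h = b0"
    by (rule pb_univ[OF pb2 a0h' b0h' ea0])
  have psichi: "psi \<cdot> chi = idd Pb"
    apply (rule ex1_eq[OF U2])
    using comp_hom[OF chih psih] assoc[OF chih psih a0h] assoc[OF chih psih b0h] a0psi b0psi jchi p2chi
      id_hom[OF Pbo] id_r[OF a0h] id_r[OF b0h] unfolding Pb_def[symmetric] by auto
  have "j \<cdot> (chi \<cdot> psi) = j \<cdot> idd Y2" using assoc[OF psih chih jh] jchi a0psi id_r[OF jh] by simp
  hence chipsi: "chi \<cdot> psi = idd Y2"
    using monoD[OF jm jh comp_hom[OF psih chih] id_hom[OF Y2o]] by simp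
  have Db0: "Dom C b0 = Pb" using homD(2)[OF b0h] .
  have p2d: "deflation E p2"
    using defl_comp_iso[OF b0d, of psi Y2 chi] psih chih chipsi psichi Db0 b0psi by simp
  have p2i2: "p2 \<cdot> i2 = ZZ X2 Z2"
  proof -
    have "uZ \<cdot> (p2 \<cdot> i2) = (p \<cdot> uY) \<cdot> i2" using assoc[OF i2h p2h uZh] uZp2 by simp
    also have "\<dots> = p \<cdot> (i \<cdot> uX)" using assoc[OF i2h uYh ph] uYi2 by simp
    also have "\<dots> = ZZ X Z \<cdot> uX" using assoc[OF uXh ih ph] pi0 by simp
    also have "\<dots> = uZ \<cdot> ZZ X2 Z2" using zero_comp[OF uXh Zo] comp_zero[OF uZh X2o] by simp
    finally show ?thesis using monoD[OF uZm uZh comp_hom[OF i2h p2h] zer_hom[OF X2o Z2o]] by simp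
  qed
  have "mono_ar (uY \<cdot> i2)" using mono_comp[OF uXh ih uXm im] uYi2 by simp
  hence i2m: "mono_ar i2" using mono_cancel[OF i2h uYh] by simp
  have FP3: "\<exists>z\<in>Hom t X2. i2 \<cdot> z = y" if yh: "y \<in> Hom t Y2" and yz: "p2 \<cdot> y = ZZ t Z2" for t y
  proof -
    have to: "t \<in> Ob C" using homD(4)[OF yh] .
    have jyh: "j \<cdot> y \<in> Hom t P" using comp_hom[OF yh jh] .
    have "p'' \<cdot> (j \<cdot> y) = ZZ t Z2" using assoc[OF yh jh p''h] p''j yz by simp
    then obtain x where xh: "x \<in> Hom t X" and ix: "i'' \<cdot> x = j \<cdot> y" using FP1[OF jyh] by blast
    have "vX \<cdot> x = g \<cdot> (i'' \<cdot> x)" using assoc[OF xh i''h(1) gh] gi'' by simp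
    also have "\<dots> = (g \<cdot> j) \<cdot> y" using ix assoc[OF yh jh gh] by simp
    also have "\<dots> = ZZ t A0" using gj zero_comp[OF yh A0o] by simp
    finally obtain z where zh: "z \<in> Hom t X2" and uxz: "uX \<cdot> z = x"
      using ker_factor[OF E_ker[OF uXv], of x t] xh homD(2,3)[OF vXh] unfolding X2_def by auto
    have "uY \<cdot> (i2 \<cdot> z) = i \<cdot> x" using assoc[OF zh i2h uYh] uYi2 assoc[OF zh uXh ih] uxz by simp
    also have "\<dots> = w \<cdot> (j \<cdot> y)" using i''h(2) assoc[OF xh i''h(1) wh] ix by simp
    also have "\<dots> = uY \<cdot> y" using assoc[OF yh jh wh] wj by simp
    finally have "i2 \<cdot> z = y" using monoD[OF uYm uYh comp_hom[OF zh i2h] yh] by simp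
    thus ?thesis using zh by blast
  qed
  have i2ker: "is_kernel C i2 p2" by (rule is_kernelI[OF i2h p2h p2i2 FP3 i2m])
  obtain k2 where "(k2, p2) \<in> E" using p2d unfolding deflation_def by blast
  hence i2p2: "(i2, p2) \<in> E" using ker_replace i2ker by blast
  have PB: "is_pullback C i uY uX i2"
  proof (rule is_pullbackI[OF ih uYh uXh i2h uYi2[symmetric] _ uXm])
    fix t x y assume xh: "x \<in> Hom t X" and yh: "y \<in> Hom t Y2" and ixy: "i \<cdot> x = uY \<cdot> y"
    have to: "t \<in> Ob C" using homD(4)[OF xh] .
    have "a \<cdot> (vX \<cdot> x) = f \<cdot> (i \<cdot> x)" using assoc[OF xh vXh ah] fia assoc[OF xh ih fh] by simp
    also have "\<dots> = (f \<cdot> uY) \<cdot> y" using ixy assoc[OF yh uYh fh] by simp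
    also have "\<dots> = a \<cdot> ZZ t A0" using fuY zero_comp[OF yh Bo] comp_zero[OF ah to] by simp
    finally have "vX \<cdot> x = ZZ t A0" using monoD[OF am ah comp_hom[OF xh vXh] zer_hom[OF to A0o]] by simp
    then obtain h where hh: "h \<in> Hom t X2" and uxh: "uX \<cdot> h = x"
      using ker_factor[OF E_ker[OF uXv], of x t] xh homD(2,3)[OF vXh] unfolding X2_def by auto
    have "uY \<cdot> (i2 \<cdot> h) = uY \<cdot> y" using assoc[OF hh i2h uYh] uYi2 assoc[OF hh uXh ih] uxh ixy by simp
    hence "i2 \<cdot> h = y" using monoD[OF uYm uYh comp_hom[OF hh i2h] yh] by simp
    thus "\<exists>h\<in>Hom t X2. uX \<cdot> h = x \<and> i2 \<cdot> h = y" using hh uxh by blast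
  qed
  have PO: "is_pushout C p f vZ c"
  proof (rule is_pushoutI[OF ph fh vZh ch vZp _ ce])
    fix t x y assume xh: "x \<in> Hom Z t" and yh: "y \<in> Hom B t" and xy: "x \<cdot> p = y \<cdot> f"
    have to: "t \<in> Ob C" using homD(5)[OF xh] .
    have "(y \<cdot> a) \<cdot> vX = (y \<cdot> f) \<cdot> i" using assoc[OF vXh ah yh] fia assoc[OF ih fh yh] by simp
    also have "\<dots> = x \<cdot> (p \<cdot> i)" using xy assoc[OF ih ph xh] by simp
    also have "\<dots> = ZZ A0 t \<cdot> vX" using pi0 comp_zero[OF xh Xo] zero_comp[OF vXh to] by simp
    finally have "y \<cdot> a = ZZ A0 t" using epiD[OF vXe vXh comp_hom[OF ah yh] zer_hom[OF A0o to]] by simp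
    then obtain h where hh: "h \<in> Hom C0 t" and hc: "h \<cdot> c = y"
      using coker_factor[OF E_coker[OF ac], of y t] yh homD(2,3)[OF ah] unfolding C0_def by auto
    have "(h \<cdot> vZ) \<cdot> p = x \<cdot> p" using assoc[OF ph vZh hh] vZp assoc[OF fh ch hh] hc xy by simp
    hence "h \<cdot> vZ = x" using epiD[OF pe ph comp_hom[OF vZh hh] xh] by simp
    thus "\<exists>h\<in>Hom C0 t. h \<cdot> vZ = x \<and> h \<cdot> c = y" using hh hc by blast
  qed
  have AI: "A_inv_inflation C E AA uX" "A_inv_inflation C E AA uY" "A_inv_inflation C E AA uZ"
    unfolding A_inv_inflation_def
    using uXv uYf uZv homD(3)[OF vXh] homD(3)[OF fh] homD(3)[OF vZh] A0A BA C0A by auto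
  show ?thesis
    apply (rule exI[of _ X2], rule exI[of _ Y2], rule exI[of _ Z2], rule exI[of _ A0], rule exI[of _ C0])
    apply (rule exI[of _ i2], rule exI[of _ p2], rule exI[of _ a], rule exI[of _ c], rule exI[of _ uX])
    apply (rule exI[of _ uY], rule exI[of _ uZ], rule exI[of _ vX], rule exI[of _ vZ])
    using i2h p2h i2p2 ah ch ac A0A BA C0A uXh vXh uXv uYh uYf uZh vZh uZv AI
      uYi2 uZp2 fia vZp PB PO by simp
qed

end

theorem mainTheorem7:
  fixes C :: "('o,'m) cat" and E :: "('m \<times> 'm) set" and \<A> :: "'o set"
    and X Y Z B :: 'o and i p f :: 'm
  assumes "deflation_exact C E"
    and "adm_defl_percolating C E \<A>"
    and "(i, p) \<in> E" and "i \<in> hom C X Y" and "p \<in> hom C Y Z"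
    and "deflation E f" and "f \<in> hom C Y B" and "B \<in> \<A>"
  shows "\<exists>X2 Y2 Z2 A0 C0 i2 p2 a c uX uY uZ vX vZ.
     \<comment> \<open>top row\<close>
     i2 \<in> hom C X2 Y2 \<and> p2 \<in> hom C Y2 Z2 \<and> (i2, p2) \<in> E \<and>
     \<comment> \<open>bottom row, lying in \<A>\<close>
     a \<in> hom C A0 B \<and> c \<in> hom C B C0 \<and> (a, c) \<in> E \<and>
     A0 \<in> \<A> \<and> B \<in> \<A> \<and> C0 \<in> \<A> \<and>
     \<comment> \<open>columns\<close>
     uX \<in> hom C X2 X \<and> vX \<in> hom C X A0 \<and> (uX, vX) \<in> E \<and>
     uY \<in> hom C Y2 Y \<and> (uY, f) \<in> E \<and>
     uZ \<in> hom C Z2 Z \<and> vZ \<in> hom C Z C0 \<and> (uZ, vZ) \<in> E \<and>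
     \<comment> \<open>upper vertical maps are \<A>^{-1}-inflations\<close>
     A_inv_inflation C E \<A> uX \<and> A_inv_inflation C E \<A> uY \<and> A_inv_inflation C E \<A> uZ \<and>
     \<comment> \<open>commutativity\<close>
     Comp C i uX = Comp C uY i2 \<and> Comp C p uY = Comp C uZ p2 \<and>
     Comp C f i = Comp C a vX \<and> Comp C vZ p = Comp C c f \<and>
     \<comment> \<open>upper left square is a pullback, lower right square is a pushout\<close>
     is_pullback C i uY uX i2 \<and> is_pushout C p f vZ c"
  proof -
  interpret dex C E "\<A>" using assms(1,2) by unfold_locales
  show ?thesis by (rule main[OF assms(3-8)])
qed

end
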